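(* The logic $\mathsf{ICK}\oplus((p\to q)\to(p\mathrel{\Box\!\!\!\rightarrow} q))$ is sound and complete with respect to the class of conditional frames $(X,\leq,\mathcal{R})$ satisfying $R_a[x]\subseteq{\uparrow}x\cap a$ for all $x\in X$ and all upsets $a$.
   Context: Formulas: $\phi ::= p\mid\bot\mid\phi\wedge\phi\mid\phi\vee\phi\mid\phi\to\phi\mid\phi\mathrel{\Box\!\!\!\rightarrow}\phi$. $\mathsf{ICK}\oplus\Gamma$ is the smallest set containing intuitionistic propositional logic, $\Gamma$, $(p\mathrel{\Box\!\!\!\rightarrow}(q\wedge r))\leftrightarrow((p\mathrel{\Box\!\!\!\rightarrow} q)\wedge(p\mathrel{\Box\!\!\!\rightarrow} r))$ and $(p\mathrel{\Box\!\!\!\rightarrow}\top)\leftrightarrow\top$, closed under uniform substitution, modus ponens and congruence rules for both arguments of $\mathrel{\Box\!\!\!\rightarrow}$. A conditional frame is $(X,\leq,\mathcal{R})$, $(X,\leq)$ a nonempty preorder, $\mathcal{R}=\{R_a\mid a\text{ an upset}\}$ with $(\leq\circ R_a)\subseteq(R_a\circ\leq)$; valuations assign upsets to letters and $x\models\phi\mathrel{\Box\!\!\!\rightarrow}\psi$ iff every $y$ with $xR_{V(\phi)}y$ satisfies $\psi$. ${\uparrow}x=\{y\mid x\leq y\}$. *)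

theory Defs
  imports Main
begin

datatype fm = Var nat | Bot | And fm fm | Or fm fm | Imp fm fm | Cond fm fm

definition Top :: fm where "Top = Imp Bot Bot"
definition Iff :: "fm \<Rightarrow> fm \<Rightarrow> fm" where "Iff a b = And (Imp a b) (Imp b a)"

primrec subst :: "(nat \<Rightarrow> fm) \<Rightarrow> fm \<Rightarrow> fm" where
  "subst s (Var n) = s n"
| "subst s Bot = Bot"
| "subst s (And a b) = And (subst s a) (subst s b)"
| "subst s (Or a b) = Or (subst s a) (subst s b)"
| "subst s (Imp a b) = Imp (subst s a) (subst s b)"
| "subst s (Cond a b) = Cond (subst s a) (subst s b)"

text \<open>Intuitionistic propositional logic is given by a standard Hilbert system
(axiom schemas over the full language + modus ponens); the conditional axioms
are stated with the letters p = Var 0, q = Var 1, r = Var 2, and the set is closed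
under uniform substitution, modus ponens and the two congruence rules.\<close>

inductive_set ICK :: "fm set \<Rightarrow> fm set" for \<Gamma> :: "fm set" where
  ax_K: "Imp a (Imp b a) \<in> ICK \<Gamma>"
| ax_S: "Imp (Imp a (Imp b c)) (Imp (Imp a b) (Imp a c)) \<in> ICK \<Gamma>"
| ax_andE1: "Imp (And a b) a \<in> ICK \<Gamma>"
| ax_andE2: "Imp (And a b) b \<in> ICK \<Gamma>"
| ax_andI: "Imp a (Imp b (And a b)) \<in> ICK \<Gamma>"
| ax_orI1: "Imp a (Or a b) \<in> ICK \<Gamma>"
| ax_orI2: "Imp b (Or a b) \<in> ICK \<Gamma>"
| ax_orE: "Imp (Imp a c) (Imp (Imp b c) (Imp (Or a b) c)) \<in> ICK \<Gamma>"
| ax_efq: "Imp Bot a \<in> ICK \<Gamma>"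
| ax_Gamma: "g \<in> \<Gamma> \<Longrightarrow> g \<in> ICK \<Gamma>"
| ax_CM: "Iff (Cond (Var 0) (And (Var 1) (Var 2)))
              (And (Cond (Var 0) (Var 1)) (Cond (Var 0) (Var 2))) \<in> ICK \<Gamma>"
| ax_CN: "Iff (Cond (Var 0) Top) Top \<in> ICK \<Gamma>"
| subst_rule: "a \<in> ICK \<Gamma> \<Longrightarrow> subst s a \<in> ICK \<Gamma>"
| mp: "Imp a b \<in> ICK \<Gamma> \<Longrightarrow> a \<in> ICK \<Gamma> \<Longrightarrow> b \<in> ICK \<Gamma>"
| cong_left: "Iff a b \<in> ICK \<Gamma> \<Longrightarrow> Iff (Cond a c) (Cond b c) \<in> ICK \<Gamma>"
| cong_right: "Iff a b \<in> ICK \<Gamma> \<Longrightarrow> Iff (Cond c a) (Cond c b) \<in> ICK \<Gamma>"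

definition axImpCond :: fm where
  "axImpCond = Imp (Imp (Var 0) (Var 1)) (Cond (Var 0) (Var 1))"

text \<open>A frame is given by a carrier X, a relation le and a family R of relations
indexed by subsets; only the R a for upsets a are relevant.\<close>

definition upset :: "'w set \<Rightarrow> ('w \<Rightarrow> 'w \<Rightarrow> bool) \<Rightarrow> 'w set \<Rightarrow> bool" where
  "upset X le a \<longleftrightarrow> a \<subseteq> X \<and> (\<forall>x\<in>a. \<forall>y\<in>X. le x y \<longrightarrow> y \<in> a)"

definition cond_frame ::
  "'w set \<Rightarrow> ('w \<Rightarrow> 'w \<Rightarrow> bool) \<Rightarrow> ('w set \<Rightarrow> 'w \<Rightarrow> 'w \<Rightarrow> bool) \<Rightarrow> bool" where
  "cond_frame X le R \<longleftrightarrow>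
     X \<noteq> {} \<and>
     (\<forall>x\<in>X. le x x) \<and>
     (\<forall>x\<in>X. \<forall>y\<in>X. \<forall>z\<in>X. le x y \<longrightarrow> le y z \<longrightarrow> le x z) \<and>
     (\<forall>a. upset X le a \<longrightarrow> (\<forall>x y. R a x y \<longrightarrow> x \<in> X \<and> y \<in> X)) \<and>
     (\<forall>a. upset X le a \<longrightarrow>
        (\<forall>x\<in>X. \<forall>y\<in>X. \<forall>z\<in>X. le x y \<longrightarrow> R a y z \<longrightarrow> (\<exists>w\<in>X. R a x w \<and> le w z)))"

fun sat :: "'w set \<Rightarrow> ('w \<Rightarrow> 'w \<Rightarrow> bool) \<Rightarrow> ('w set \<Rightarrow> 'w \<Rightarrow> 'w \<Rightarrow> bool)
            \<Rightarrow> (nat \<Rightarrow> 'w set) \<Rightarrow> 'w \<Rightarrow> fm \<Rightarrow> bool" where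
  "sat X le R V x (Var n) \<longleftrightarrow> x \<in> V n"
| "sat X le R V x Bot \<longleftrightarrow> False"
| "sat X le R V x (And a b) \<longleftrightarrow> sat X le R V x a \<and> sat X le R V x b"
| "sat X le R V x (Or a b) \<longleftrightarrow> sat X le R V x a \<or> sat X le R V x b"
| "sat X le R V x (Imp a b) \<longleftrightarrow>
     (\<forall>y\<in>X. le x y \<longrightarrow> sat X le R V y a \<longrightarrow> sat X le R V y b)"
| "sat X le R V x (Cond a b) \<longleftrightarrow>
     (\<forall>y. R {z\<in>X. sat X le R V z a} x y \<longrightarrow> sat X le R V y b)"

definition valid_frame ::
  "'w set \<Rightarrow> ('w \<Rightarrow> 'w \<Rightarrow> bool) \<Rightarrow> ('w set \<Rightarrow> 'w \<Rightarrow> 'w \<Rightarrow> bool) \<Rightarrow> fm \<Rightarrow> bool" where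
  "valid_frame X le R \<phi> \<longleftrightarrow>
     (\<forall>V. (\<forall>n. upset X le (V n)) \<longrightarrow> (\<forall>x\<in>X. sat X le R V x \<phi>))"

definition impcond_frame ::
  "'w set \<Rightarrow> ('w \<Rightarrow> 'w \<Rightarrow> bool) \<Rightarrow> ('w set \<Rightarrow> 'w \<Rightarrow> 'w \<Rightarrow> bool) \<Rightarrow> bool" where
  "impcond_frame X le R \<longleftrightarrow> cond_frame X le R \<and>
     (\<forall>a. upset X le a \<longrightarrow> (\<forall>x\<in>X. \<forall>y. R a x y \<longrightarrow> le x y \<and> y \<in> a))"

definition valid_class :: "'w itself \<Rightarrow> fm \<Rightarrow> bool" where
  "valid_class _ \<phi> \<longleftrightarrow>
     (\<forall>(X::'w set) le R. impcond_frame X le R \<longrightarrow> valid_frame X le R \<phi>)"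

end

theory Submission
  imports Defs
begin


lemma persist:
  assumes F: "cond_frame X le R" and V: "\<forall>n. upset X le (V n)"
  shows "x \<in> X \<Longrightarrow> y \<in> X \<Longrightarrow> le x y \<Longrightarrow> sat X le R V x \<phi> \<Longrightarrow> sat X le R V y \<phi>"
proof (induction \<phi> arbitrary: x y)
  case (Var n)
  then show ?case using V unfolding upset_def by simp
next
  case Bot then show ?case by simp
next
  case (And a b) then show ?case by simp
next
  case (Or a b) then show ?case by auto
next
  case (Imp a b)
  have tr: "\<And>x y z. x \<in> X \<Longrightarrow> y \<in> X \<Longrightarrow> z \<in> X \<Longrightarrow> le x y \<Longrightarrow> le y z \<Longrightarrow> le x z"
    using F unfolding cond_frame_def by blast
  show ?case
  proof (simp only: sat.simps, intro ballI impI)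
    fix z assume "z \<in> X" "le y z" "sat X le R V z a"
    moreover have "le x z" using tr Imp.prems \<open>z \<in> X\<close> \<open>le y z\<close> by blast
    ultimately show "sat X le R V z b" using Imp.prems(4) by simp
  qed
next
  case (Cond a b)
  let ?A = "{z\<in>X. sat X le R V z a}"
  have up: "upset X le ?A" unfolding upset_def using Cond.IH(1) by blast
  show ?case
  proof (simp only: sat.simps, intro allI impI)
    fix z assume Rz: "R ?A y z"
    have zX: "z \<in> X" using F up Rz unfolding cond_frame_def by blast
    have "\<exists>w\<in>X. R ?A x w \<and> le w z"
      using F up Cond.prems Rz zX unfolding cond_frame_def by blast
    then obtain w where w: "w \<in> X" "R ?A x w" "le w z" by blast
    have "sat X le R V w b" using Cond.prems(4) w(2) by simp
    then show "sat X le R V z b" using Cond.IH(2)[OF w(1) zX w(3)] by simp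
  qed
qed

lemma truth_upset:
  assumes F: "cond_frame X le R" and V: "\<forall>n. upset X le (V n)"
  shows "upset X le {z\<in>X. sat X le R V z \<phi>}"
  unfolding upset_def using persist[OF F V] by blast

lemma sat_subst:
  assumes F: "cond_frame X le R" and V: "\<forall>n. upset X le (V n)"
  shows "x \<in> X \<Longrightarrow> sat X le R V x (subst s \<phi>) =
     sat X le R (\<lambda>n. {z\<in>X. sat X le R V z (s n)}) x \<phi>"
proof (induction \<phi> arbitrary: x)
  case (Cond a b)
  let ?V' = "\<lambda>n. {z\<in>X. sat X le R V z (s n)}"
  have V': "\<forall>n. upset X le (?V' n)" using truth_upset[OF F V] by blast
  have eq: "{z\<in>X. sat X le R V z (subst s a)} = {z\<in>X. sat X le R ?V' z a}"
    using Cond.IH(1) by blast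
  have up: "upset X le {z\<in>X. sat X le R ?V' z a}" using truth_upset[OF F V'] .
  have RX: "\<And>y. R {z\<in>X. sat X le R ?V' z a} x y \<Longrightarrow> y \<in> X"
    using F up unfolding cond_frame_def by blast
  have "sat X le R V x (subst s (Cond a b)) = (\<forall>y. R {z\<in>X. sat X le R ?V' z a} x y \<longrightarrow> sat X le R V y (subst s b))"
    by (simp only: subst.simps sat.simps eq)
  also have "\<dots> = (\<forall>y. R {z\<in>X. sat X le R ?V' z a} x y \<longrightarrow> sat X le R ?V' y b)"
    using Cond.IH(2) RX by blast
  finally show ?case by simp
next
  case (Imp a b)
  then show ?case by (simp only: subst.simps sat.simps) blast
qed auto

lemma cf_refl: "cond_frame X le R \<Longrightarrow> x \<in> X \<Longrightarrow> le x x"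
  unfolding cond_frame_def by blast

lemma cf_trans: "cond_frame X le R \<Longrightarrow> x \<in> X \<Longrightarrow> y \<in> X \<Longrightarrow> z \<in> X \<Longrightarrow> le x y \<Longrightarrow> le y z \<Longrightarrow> le x z"
  unfolding cond_frame_def by blast

lemma cf_RX: "cond_frame X le R \<Longrightarrow> upset X le a \<Longrightarrow> R a x y \<Longrightarrow> y \<in> X"
  unfolding cond_frame_def by blast

lemma ic_R: "impcond_frame X le R \<Longrightarrow> upset X le a \<Longrightarrow> x \<in> X \<Longrightarrow> R a x y \<Longrightarrow> le x y \<and> y \<in> a"
  unfolding impcond_frame_def by blast

lemma sound_frame:
  assumes "\<phi> \<in> ICK {axImpCond}" and IF: "impcond_frame X le R"
  shows "valid_frame X le R \<phi>"
proof -
  have F: "cond_frame X le R" using IF by (simp add: impcond_frame_def)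
  note refl = cf_refl[OF F] and trans = cf_trans[OF F]
  note P = persist[OF F]
  show ?thesis using assms(1)
  proof (induction rule: ICK.induct)
    case (ax_K a b) show ?case unfolding valid_frame_def
      apply (simp only: sat.simps)
      apply (intro allI impI ballI)
      using P by blast
  next
    case (ax_S a b c) show ?case unfolding valid_frame_def
      apply (simp only: sat.simps)
      apply (intro allI impI ballI)
      subgoal for V x y z w
        using refl[of w] trans[of y z w] by blast
      done
  next
    case (ax_andE1 a b) show ?case unfolding valid_frame_def by simp
  next
    case (ax_andE2 a b) show ?case unfolding valid_frame_def by simp
  next
    case (ax_andI a b) show ?case unfolding valid_frame_def
      apply (simp only: sat.simps)
      apply (intro allI impI ballI conjI)
      subgoal for V x y z using P[of V y z a] by blast
      subgoal for V x y z by blast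
      done
  next
    case (ax_orI1 a b) show ?case unfolding valid_frame_def by simp
  next
    case (ax_orI2 a b) show ?case unfolding valid_frame_def by simp
  next
    case (ax_orE a c b) show ?case unfolding valid_frame_def
      apply (simp only: sat.simps)
      apply (intro allI impI ballI)
      subgoal for V x y z w
        using refl[of w] trans[of y z w] by blast
      done
  next
    case (ax_efq a) show ?case unfolding valid_frame_def by simp
  next
    case (ax_Gamma g)
    then have g: "g = axImpCond" by simp
    show ?case unfolding valid_frame_def g axImpCond_def
    proof (intro allI impI ballI)
      fix V :: "nat \<Rightarrow> _" and x assume V: "\<forall>n. upset X le (V n)" and x: "x \<in> X"
      have A: "{z\<in>X. z \<in> V 0} = V 0" using V unfolding upset_def by auto
      have RR: "\<And>x y. x \<in> X \<Longrightarrow> R (V 0) x y \<Longrightarrow> le x y \<and> y \<in> V 0 \<and> y \<in> X"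
        using ic_R[OF IF] cf_RX[OF F] V by blast
      show "sat X le R V x (Imp (Imp (Var 0) (Var 1)) (Cond (Var 0) (Var 1)))"
        apply (simp only: sat.simps A)
        apply (intro allI impI ballI)
        subgoal for y z using RR[of y z] by simp
        done
    qed
  next
    case ax_CM show ?case unfolding valid_frame_def Iff_def by auto
  next
    case ax_CN show ?case unfolding valid_frame_def Iff_def Top_def by auto
  next
    case (subst_rule a s)
    show ?case unfolding valid_frame_def
    proof (intro allI impI ballI)
      fix V :: "nat \<Rightarrow> _" and x assume V: "\<forall>n. upset X le (V n)" and x: "x \<in> X"
      have V': "\<forall>n. upset X le {z\<in>X. sat X le R V z (s n)}" using truth_upset[OF F V] by blast
      have "sat X le R (\<lambda>n. {z\<in>X. sat X le R V z (s n)}) x a"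
        using subst_rule.IH[unfolded valid_frame_def, rule_format, OF V'[rule_format] x] .
      then show "sat X le R V x (subst s a)"
        using sat_subst[OF F V x] by simp
    qed
  next
    case (mp a b) then show ?case using refl unfolding valid_frame_def by simp
  next
    case (cong_left a b c)
    show ?case unfolding valid_frame_def
    proof (intro allI impI ballI)
      fix V :: "nat \<Rightarrow> _" and x assume V: "\<forall>n. upset X le (V n)" and x: "x \<in> X"
      have "{z\<in>X. sat X le R V z a} = {z\<in>X. sat X le R V z b}"
        using cong_left.IH V refl unfolding valid_frame_def Iff_def by auto
      then show "sat X le R V x (Iff (Cond a c) (Cond b c))" unfolding Iff_def by simp
    qed
  next
    case (cong_right a b c)
    show ?case unfolding valid_frame_def
    proof (intro allI impI ballI)
      fix V :: "nat \<Rightarrow> _" and x assume V: "\<forall>n. upset X le (V n)" and x: "x \<in> X"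
      have RX: "\<And>w y. R {z\<in>X. sat X le R V z c} w y \<Longrightarrow> y \<in> X"
        using cf_RX[OF F truth_upset[OF F V]] by blast
      have "\<And>y. y \<in> X \<Longrightarrow> sat X le R V y a = sat X le R V y b"
        using cong_right.IH V refl unfolding valid_frame_def Iff_def by auto
      then show "sat X le R V x (Iff (Cond c a) (Cond c b))" unfolding Iff_def using RX by (simp only: sat.simps) blast
    qed
  qed
qed



abbreviation LL :: "fm set" where "LL \<equiv> ICK {axImpCond}"

inductive pf :: "fm set \<Rightarrow> fm \<Rightarrow> bool" for S where
  pL: "a \<in> LL \<Longrightarrow> pf S a"
| pA: "a \<in> S \<Longrightarrow> pf S a"
| pMP: "pf S (Imp a b) \<Longrightarrow> pf S a \<Longrightarrow> pf S b"

lemma L_I: "Imp a a \<in> LL"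
proof -
  have 1: "Imp (Imp a (Imp (Imp a a) a)) (Imp (Imp a (Imp a a)) (Imp a a)) \<in> LL" by (rule ICK.ax_S)
  have 2: "Imp a (Imp (Imp a a) a) \<in> LL" by (rule ICK.ax_K)
  have 3: "Imp a (Imp a a) \<in> LL" by (rule ICK.ax_K)
  show ?thesis using ICK.mp[OF ICK.mp[OF 1 2] 3] .
qed

lemma pK: "pf S a \<Longrightarrow> pf S (Imp b a)"
  by (rule pMP[OF pL[OF ICK.ax_K]])

lemma deduction: "pf (insert a S) b \<Longrightarrow> pf S (Imp a b)"
proof (induction rule: pf.induct)
  case (pL c) then show ?case by (intro pK pf.pL)
next
  case (pA c)
  then show ?case
  proof
    assume "c = a" then show ?thesis using L_I pf.pL by simp
  next
    assume "c \<in> S" then show ?thesis by (intro pK pf.pA)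
  qed
next
  case (pMP c d)
  show ?case using pf.pMP[OF pf.pMP[OF pf.pL[OF ICK.ax_S] pMP.IH(1)] pMP.IH(2)] .
qed

lemma pf_mono: "pf S a \<Longrightarrow> S \<subseteq> T \<Longrightarrow> pf T a"
  by (induction rule: pf.induct) (auto intro: pf.intros)

lemma pf_finite: "pf S a \<Longrightarrow> \<exists>F. finite F \<and> F \<subseteq> S \<and> pf F a"
proof (induction rule: pf.induct)
  case (pL a) then show ?case by (intro exI[of _ "{}"]) (auto intro: pf.intros)
next
  case (pA a) then show ?case by (intro exI[of _ "{a}"]) (auto intro: pf.intros)
next
  case (pMP a b)
  then obtain F1 F2 where "finite F1" "F1 \<subseteq> S" "pf F1 (Imp a b)" "finite F2" "F2 \<subseteq> S" "pf F2 a" by blast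
  then show ?case
    by (intro exI[of _ "F1 \<union> F2"]) (meson finite_UnI le_sup_iff pf.pMP pf_mono sup_ge1 sup_ge2)
qed

definition thy :: "fm set \<Rightarrow> bool" where
  "thy S \<longleftrightarrow> LL \<subseteq> S \<and> (\<forall>a b. Imp a b \<in> S \<longrightarrow> a \<in> S \<longrightarrow> b \<in> S)"

definition prime :: "fm set \<Rightarrow> bool" where
  "prime S \<longleftrightarrow> thy S \<and> Bot \<notin> S \<and> (\<forall>a b. Or a b \<in> S \<longrightarrow> a \<in> S \<or> b \<in> S)"

lemma pf_thy: "pf S a \<Longrightarrow> thy S \<Longrightarrow> a \<in> S"
  by (induction rule: pf.induct) (auto simp: thy_def)

lemma thy_LL: "thy LL"
  unfolding thy_def using ICK.mp by blast

lemma pf_empty: "pf {} a \<Longrightarrow> a \<in> LL"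
  using pf_thy thy_LL pf_mono by blast

lemma thy_mp: "thy S \<Longrightarrow> Imp a b \<in> S \<Longrightarrow> a \<in> S \<Longrightarrow> b \<in> S"
  unfolding thy_def by blast

lemma thy_L: "thy S \<Longrightarrow> a \<in> LL \<Longrightarrow> a \<in> S"
  unfolding thy_def by blast

lemma lindenbaum:
  assumes "\<not> pf S \<psi>"
  shows "\<exists>M. S \<subseteq> M \<and> prime M \<and> \<psi> \<notin> M"
proof -
  let ?A = "{T. S \<subseteq> T \<and> \<not> pf T \<psi>}"
  have "\<exists>M\<in>?A. \<forall>X\<in>?A. M \<subseteq> X \<longrightarrow> X = M"
  proof (rule subset_Zorn_nonempty)
    show "?A \<noteq> {}" using assms by blast
  next
    fix C assume C: "C \<noteq> {}" "subset.chain ?A C"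
    have S: "S \<subseteq> \<Union>C" using C unfolding subset.chain_def by blast
    have "\<not> pf (\<Union>C) \<psi>"
    proof
      assume "pf (\<Union>C) \<psi>"
      then obtain F where F: "finite F" "F \<subseteq> \<Union>C" "pf F \<psi>" using pf_finite by blast
      obtain B where "B \<in> C" "F \<subseteq> B" using finite_subset_Union_chain[OF F(1) F(2) C(1) C(2)] by blast
      then have "pf B \<psi>" using pf_mono F(3) by blast
      then show False using \<open>B \<in> C\<close> C(2) unfolding subset.chain_def by blast
    qed
    then show "\<Union>C \<in> ?A" using S by blast
  qed
  then obtain M where M0: "M \<in> ?A" and max0: "\<forall>X\<in>?A. M \<subseteq> X \<longrightarrow> X = M"
    by (elim bexE)
  have M: "S \<subseteq> M" "\<not> pf M \<psi>" using M0 by auto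
  have max: "X = M" if "S \<subseteq> X" "\<not> pf X \<psi>" "M \<subseteq> X" for X
    using max0 that by auto
  have ext: "pf (insert c M) \<psi>" if "c \<notin> M" for c
    using max[of "insert c M"] M that by blast
  have cl: "c \<in> M" if "pf M c" for c
  proof (rule ccontr)
    assume "c \<notin> M"
    then have "pf M (Imp c \<psi>)" using ext deduction by blast
    then have "pf M \<psi>" using pf.pMP that by blast
    then show False using M by blast
  qed
  have th: "thy M" unfolding thy_def
  proof (intro conjI allI impI subsetI)
    fix c assume "c \<in> LL" then show "c \<in> M" using cl pf.pL by blast
  next
    fix a b assume "Imp a b \<in> M" "a \<in> M"
    then show "b \<in> M" using cl pf.pMP[OF pf.pA pf.pA] by blast
  qed
  have bot: "Bot \<notin> M"
  proof
    assume "Bot \<in> M"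
    then have "pf M \<psi>" using pf.pMP[OF pf.pL[OF ICK.ax_efq] pf.pA] by blast
    then show False using M by blast
  qed
  have pr: "a \<in> M \<or> b \<in> M" if "Or a b \<in> M" for a b
  proof (rule ccontr)
    assume "\<not> (a \<in> M \<or> b \<in> M)"
    then have 1: "pf M (Imp a \<psi>)" and 2: "pf M (Imp b \<psi>)" using ext deduction by auto
    have 3: "pf M (Imp (Imp a \<psi>) (Imp (Imp b \<psi>) (Imp (Or a b) \<psi>)))" by (rule pf.pL, rule ICK.ax_orE)
    have "pf M \<psi>"
      using pf.pMP[OF pf.pMP[OF pf.pMP[OF 3 1] 2] pf.pA[OF that]] .
    then show False using M by blast
  qed
  have "\<psi> \<notin> M" using M pf.pA by blast
  then show ?thesis using M th bot pr unfolding prime_def by blast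
qed



lemma Bot_notin: "Bot \<notin> LL"
proof
  assume "Bot \<in> LL"
  have IF: "impcond_frame {()} (\<lambda>_ _. True) (\<lambda>_ _ _. False)"
    unfolding impcond_frame_def cond_frame_def by simp
  have "valid_frame {()} (\<lambda>_ _. True) (\<lambda>_ _ _. False) Bot"
    using sound_frame[OF \<open>Bot \<in> LL\<close> IF] .
  moreover have "\<forall>n. upset {()} (\<lambda>_ _. True) ((\<lambda>_. {}) n)" unfolding upset_def by simp
  ultimately show False unfolding valid_frame_def by auto
qed

lemma thy_and: "thy S \<Longrightarrow> And a b \<in> S \<longleftrightarrow> a \<in> S \<and> b \<in> S"
  using thy_mp[OF _ thy_L[OF _ ICK.ax_andE1]] thy_mp[OF _ thy_L[OF _ ICK.ax_andE2]]
    thy_mp[OF _ thy_mp[OF _ thy_L[OF _ ICK.ax_andI]]] by blast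

lemma thy_iff: "thy S \<Longrightarrow> Iff a b \<in> LL \<Longrightarrow> a \<in> S \<Longrightarrow> b \<in> S"
  unfolding Iff_def using thy_and thy_L thy_mp by blast

lemma thy_iff2: "thy S \<Longrightarrow> Iff a b \<in> LL \<Longrightarrow> b \<in> S \<Longrightarrow> a \<in> S"
  unfolding Iff_def using thy_and thy_L thy_mp by blast

lemma LL_mp: "Imp a b \<in> LL \<Longrightarrow> a \<in> LL \<Longrightarrow> b \<in> LL"
  by (rule ICK.mp)

lemma LL_iffI: "Imp a b \<in> LL \<Longrightarrow> Imp b a \<in> LL \<Longrightarrow> Iff a b \<in> LL"
  unfolding Iff_def using ICK.mp[OF ICK.mp[OF ICK.ax_andI]] by blast

lemma CM_inst: "Iff (Cond a (And b c)) (And (Cond a b) (Cond a c)) \<in> LL"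
proof -
  define s where "s = (\<lambda>n::nat. if n = 0 then a else if n = 1 then b else c)"
  have "subst s (Iff (Cond (Var 0) (And (Var 1) (Var 2)))
              (And (Cond (Var 0) (Var 1)) (Cond (Var 0) (Var 2)))) \<in> LL"
    by (rule ICK.subst_rule[OF ICK.ax_CM])
  then show ?thesis by (simp add: Iff_def s_def)
qed

lemma IC_inst: "Imp (Imp a b) (Cond a b) \<in> LL"
proof -
  define s where "s = (\<lambda>n::nat. if n = 0 then a else b)"
  have "subst s axImpCond \<in> LL"
    by (rule ICK.subst_rule[OF ICK.ax_Gamma]) simp
  then show ?thesis by (simp add: axImpCond_def s_def)
qed

lemma pf_LL: "pf {} a \<Longrightarrow> a \<in> LL" by (rule pf_empty)

lemma taut1: "Iff (And (Imp p q) p) (And q (And (Imp p q) p)) \<in> LL"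
proof (rule LL_iffI)
  let ?A = "And (Imp p q) p"
  have h: "pf {?A} ?A" by (rule pf.pA) simp
  have h1: "pf {?A} (Imp p q)" by (rule pf.pMP[OF pf.pL[OF ICK.ax_andE1] h])
  have h2: "pf {?A} p" by (rule pf.pMP[OF pf.pL[OF ICK.ax_andE2] h])
  have h3: "pf {?A} q" by (rule pf.pMP[OF h1 h2])
  have "pf {?A} (And q ?A)" by (rule pf.pMP[OF pf.pMP[OF pf.pL[OF ICK.ax_andI] h3] h])
  then have "pf {} (Imp ?A (And q ?A))" by (intro deduction) simp
  then show "Imp ?A (And q ?A) \<in> LL" by (rule pf_LL)
  show "Imp (And q ?A) ?A \<in> LL" by (rule ICK.ax_andE2)
qed

lemma cond_mp:
  assumes x: "thy x" and 1: "Cond a (Imp p q) \<in> x" and 2: "Cond a p \<in> x"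
  shows "Cond a q \<in> x"
proof -
  have "And (Cond a (Imp p q)) (Cond a p) \<in> x" using thy_and[OF x] 1 2 by blast
  then have "Cond a (And (Imp p q) p) \<in> x" using thy_iff2[OF x CM_inst] by blast
  then have "Cond a (And q (And (Imp p q) p)) \<in> x" using thy_iff[OF x ICK.cong_right[OF taut1]] by blast
  then have "And (Cond a q) (Cond a (And (Imp p q) p)) \<in> x" using thy_iff[OF x CM_inst] by blast
  then show ?thesis using thy_and[OF x] by blast
qed

definition CX :: "fm set set" where "CX = {M. prime M}"

definition Rc :: "fm set set \<Rightarrow> fm set \<Rightarrow> fm set \<Rightarrow> bool" where
  "Rc a x y \<longleftrightarrow> x \<in> CX \<and> y \<in> CX \<and> x \<subseteq> y \<and> y \<in> a \<and>
     (\<forall>\<phi>. a = {z\<in>CX. \<phi> \<in> z} \<longrightarrow> (\<forall>\<theta>. Cond \<phi> \<theta> \<in> x \<longrightarrow> \<theta> \<in> y))"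

definition Vc :: "nat \<Rightarrow> fm set set" where "Vc n = {z\<in>CX. Var n \<in> z}"

lemma CX_thy: "x \<in> CX \<Longrightarrow> thy x" unfolding CX_def prime_def by simp

lemma CX_ne: "CX \<noteq> {}"
proof -
  have "\<not> pf {} Bot" using pf_LL Bot_notin by blast
  then obtain M where "prime M" using lindenbaum by blast
  then show ?thesis unfolding CX_def by blast
qed

lemma canon_frame: "impcond_frame CX (\<subseteq>) Rc"
  unfolding impcond_frame_def cond_frame_def
proof (intro conjI allI impI ballI CX_ne)
  fix a x y z assume "x \<in> CX" "y \<in> CX" "z \<in> CX" "x \<subseteq> y" "Rc a y z"
  then have "Rc a x z" unfolding Rc_def by blast
  then show "\<exists>w\<in>CX. Rc a x w \<and> w \<subseteq> z" using \<open>z \<in> CX\<close> by blast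
qed (auto simp: Rc_def)

lemma Vc_upset: "upset CX (\<subseteq>) (Vc n)"
  unfolding upset_def Vc_def by blast

lemma truth_eq_imp:
  assumes "{z\<in>CX. a \<in> z} \<subseteq> {z\<in>CX. b \<in> z}"
  shows "Imp a b \<in> LL"
proof (rule ccontr)
  assume nab: "Imp a b \<notin> LL"
  have "\<not> pf (insert a LL) b"
  proof
    assume "pf (insert a LL) b"
    then have "pf LL (Imp a b)" by (rule deduction)
    then show False using pf_thy thy_LL nab by blast
  qed
  then obtain M where M: "insert a LL \<subseteq> M" "prime M" "b \<notin> M" using lindenbaum by blast
  then show False using assms unfolding CX_def by blast
qed

lemma truth_lemma: "x \<in> CX \<Longrightarrow> sat CX (\<subseteq>) Rc Vc x \<phi> \<longleftrightarrow> \<phi> \<in> x"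
proof (induction \<phi> arbitrary: x)
  case (Var n) then show ?case by (simp add: Vc_def)
next
  case Bot then show ?case by (simp add: CX_def prime_def)
next
  case (And a b) then show ?case using thy_and CX_thy by simp
next
  case (Or a b)
  have "Or a b \<in> x \<longleftrightarrow> a \<in> x \<or> b \<in> x"
    using Or.prems CX_thy[OF Or.prems] thy_mp thy_L ICK.ax_orI1 ICK.ax_orI2
    unfolding CX_def prime_def by blast
  then show ?case using Or by simp
next
  case (Imp a b)
  have x: "thy x" using CX_thy[OF Imp.prems] .
  show ?case
  proof
    assume s: "sat CX (\<subseteq>) Rc Vc x (Imp a b)"
    show "Imp a b \<in> x"
    proof (rule ccontr)
      assume n: "Imp a b \<notin> x"
      have "\<not> pf (insert a x) b"
      proof
        assume "pf (insert a x) b"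
        then have "pf x (Imp a b)" by (rule deduction)
        then show False using pf_thy x n by blast
      qed
      then obtain M where M: "insert a x \<subseteq> M" "prime M" "b \<notin> M" using lindenbaum by blast
      then have MX: "M \<in> CX" unfolding CX_def by simp
      have "sat CX (\<subseteq>) Rc Vc M a" using Imp.IH(1)[OF MX] M by blast
      then have "sat CX (\<subseteq>) Rc Vc M b" using s MX M(1) by simp
      then show False using Imp.IH(2)[OF MX] M by blast
    qed
  next
    assume i: "Imp a b \<in> x"
    show "sat CX (\<subseteq>) Rc Vc x (Imp a b)"
    proof (simp only: sat.simps, intro ballI impI)
      fix y assume y: "y \<in> CX" "x \<subseteq> y" "sat CX (\<subseteq>) Rc Vc y a"
      then have "a \<in> y" using Imp.IH(1) by blast
      then have "b \<in> y" using thy_mp[OF CX_thy[OF y(1)]] i y(2) by blast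
      then show "sat CX (\<subseteq>) Rc Vc y b" using Imp.IH(2) y(1) by blast
    qed
  qed
next
  case (Cond a b)
  have x: "thy x" using CX_thy[OF Cond.prems] .
  have A: "{z\<in>CX. sat CX (\<subseteq>) Rc Vc z a} = {z\<in>CX. a \<in> z}" using Cond.IH(1) by blast
  show ?case
  proof
    assume s: "sat CX (\<subseteq>) Rc Vc x (Cond a b)"
    show "Cond a b \<in> x"
    proof (rule ccontr)
      assume n: "Cond a b \<notin> x"
      define U where "U = {\<theta>. Cond a \<theta> \<in> x}"
      have imp_U: "\<theta> \<in> U" if "Imp a \<theta> \<in> x" for \<theta>
        using thy_mp[OF x thy_L[OF x IC_inst] that] unfolding U_def by simp
      have xU: "x \<subseteq> U"
      proof
        fix \<theta> assume "\<theta> \<in> x"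
        then have "Imp a \<theta> \<in> x" using thy_mp[OF x thy_L[OF x ICK.ax_K]] by blast
        then show "\<theta> \<in> U" by (rule imp_U)
      qed
      have aU: "a \<in> U" using imp_U thy_L[OF x L_I] by blast
      have thU: "thy U" unfolding thy_def
      proof (intro conjI allI impI subsetI)
        fix c assume "c \<in> LL" then show "c \<in> U" using xU thy_L[OF x] by blast
      next
        fix p q assume "Imp p q \<in> U" "p \<in> U"
        then show "q \<in> U" unfolding U_def using cond_mp[OF x] by blast
      qed
      have "b \<notin> U" using n unfolding U_def by simp
      then have "\<not> pf U b" using pf_thy thU by blast
      then obtain M where M: "U \<subseteq> M" "prime M" "b \<notin> M" using lindenbaum by blast
      then have MX: "M \<in> CX" unfolding CX_def by simp
      have R: "Rc {z\<in>CX. a \<in> z} x M"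
        unfolding Rc_def
      proof (intro conjI allI impI)
        show "x \<in> CX" by (rule Cond.prems)
        show "M \<in> CX" by (rule MX)
        show "x \<subseteq> M" using xU M by blast
        show "M \<in> {z\<in>CX. a \<in> z}" using aU M MX by blast
      next
        fix \<phi> \<theta> assume eq: "{z\<in>CX. a \<in> z} = {z\<in>CX. \<phi> \<in> z}" and c: "Cond \<phi> \<theta> \<in> x"
        have "Iff \<phi> a \<in> LL" using truth_eq_imp eq by (intro LL_iffI) auto
        then have "Cond a \<theta> \<in> x" using thy_iff[OF x ICK.cong_left] c by blast
        then show "\<theta> \<in> M" using M unfolding U_def by blast
      qed
      have "sat CX (\<subseteq>) Rc Vc M b" using s R A by simp
      then show False using Cond.IH(2)[OF MX] M by blast
    qed
  next
    assume c: "Cond a b \<in> x"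
    show "sat CX (\<subseteq>) Rc Vc x (Cond a b)"
    proof (simp only: sat.simps A, intro allI impI)
      fix y assume R: "Rc {z\<in>CX. a \<in> z} x y"
      then have "b \<in> y" "y \<in> CX" using c unfolding Rc_def by blast+
      then show "sat CX (\<subseteq>) Rc Vc y b" using Cond.IH(2) by blast
    qed
  qed
qed

theorem proposition5p6:
  shows "(\<forall>\<phi>. \<phi> \<in> ICK {axImpCond} \<longrightarrow> valid_class TYPE('w) \<phi>)
       \<and> (\<forall>\<phi>. valid_class TYPE(fm set) \<phi> \<longrightarrow> \<phi> \<in> ICK {axImpCond})"
proof (intro conjI allI impI)
  fix \<phi> assume "\<phi> \<in> ICK {axImpCond}"
  then show "valid_class TYPE('w) \<phi>" unfolding valid_class_def using sound_frame by blast
next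
  fix \<phi> assume v: "valid_class TYPE(fm set) \<phi>"
  have "valid_frame CX (\<subseteq>) Rc \<phi>" using v canon_frame unfolding valid_class_def by blast
  then have all: "\<And>x. x \<in> CX \<Longrightarrow> \<phi> \<in> x"
    using Vc_upset truth_lemma unfolding valid_frame_def by blast
  show "\<phi> \<in> ICK {axImpCond}"
  proof (rule ccontr)
    assume "\<phi> \<notin> ICK {axImpCond}"
    then have "\<not> pf {} \<phi>" using pf_LL by blast
    then obtain M where "prime M" "\<phi> \<notin> M" using lindenbaum by blast
    then show False using all unfolding CX_def by blast
  qed
qed

end
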